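(* Let $0<\mu<L$ and $q:=\mu/L\in(0,1)$. For $\alpha,\beta,\gamma\in\mathbb{R}$ and $\lambda\in[\mu,L]$, let $$T_\lambda(\alpha,\beta,\gamma):=\begin{pmatrix}(1+\beta)(1-\alpha\lambda)-\gamma\alpha\lambda & -\beta(1-\alpha\lambda)\\ 1 & 0\end{pmatrix}\in\mathbb{R}^{2\times 2},$$ and define $\rho(\alpha,\beta,\gamma):=\max_{\mu\le\lambda\le L}\rho\big(T_\lambda(\alpha,\beta,\gamma)\big)$, where $\rho(\cdot)$ of a matrix denotes its spectral radius. Set $$\gamma^\star:=\frac{2+q-\sqrt{q^2+8q}}{2},\qquad \beta^\star:=\frac{(\gamma^\star)^2}{1-q}=\frac{\big(2+q-\sqrt{q^2+8q}\big)^2}{4(1-q)}.$$ Then $(\beta^\star,\gamma^\star)$ minimizes $(\beta,\gamma)\mapsto\rho(1/L,\beta,\gamma)$ over $\mathbb{R}^2$, with minimum value $$\rho(1/L,\beta^\star,\gamma^\star)=1-\sqrt{q(1+\gamma^\star)}=\gamma^\star .$$ Moreover, $$\frac{2+q-\sqrt{q^2+8q}}{2}\;\le\;1-\frac{2\sqrt{q}}{\sqrt{3+q}}\;\le\;1-\sqrt{q}.$$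
   Context: This concerns the iteration $y_{k+1}=x_k-\alpha\nabla f(x_k)$, $x_{k+1}=y_{k+1}+\beta(y_{k+1}-y_k)+\gamma(y_{k+1}-x_k)$ applied to a strongly convex quadratic $f(x)=\tfrac12 x^\top Qx-p^\top x$ with $Q$ symmetric positive definite with eigenvalues in $[\mu,L]$; writing $\xi_k=(x_k^\top,x_{k-1}^\top)^\top$, the error evolves as $\xi_{k+1}-\xi_*=T(\alpha,\beta,\gamma)(\xi_k-\xi_* )$, and for each eigenvalue $\lambda$ of $Q$ the corresponding $2\times2$ block is $T_\lambda(\alpha,\beta,\gamma)$ above. The method with $\alpha=1/L$, $\beta=\beta^\star$, $\gamma=\gamma^\star$ is called OGM-$q$; the quantities $1-\sqrt q$ and $1-2\sqrt q/\sqrt{3+q}$ are the corresponding worst-case spectral radii of two Nesterov-type variants with $\gamma=0$. *)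

theory Defs
  imports Complex_Main "Jordan_Normal_Form.Spectral_Radius"
begin

definition T_mat :: "real \<Rightarrow> real \<Rightarrow> real \<Rightarrow> real \<Rightarrow> real mat" where
  "T_mat lam \<alpha> \<beta> \<gamma> = mat_of_rows_list 2
     [[(1 + \<beta>) * (1 - \<alpha> * lam) - \<gamma> * \<alpha> * lam, - \<beta> * (1 - \<alpha> * lam)],
      [1, 0]]"

definition spec_rad_real :: "real mat \<Rightarrow> real" where
  "spec_rad_real A = spectral_radius (map_mat complex_of_real A)"

definition rho_worst :: "real \<Rightarrow> real \<Rightarrow> real \<Rightarrow> real \<Rightarrow> real \<Rightarrow> real" where
  "rho_worst \<mu> L \<alpha> \<beta> \<gamma> = (SUP lam\<in>{\<mu>..L}. spec_rad_real (T_mat lam \<alpha> \<beta> \<gamma>))"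

end

theory Submission
  imports Defs
begin


definition M2 :: "complex \<Rightarrow> complex \<Rightarrow> complex mat" where
  "M2 a b = mat_of_rows_list 2 [[a, -b],[1,0]]"

lemma M2_mult: fixes a b :: complex and v :: "complex vec"
  assumes "dim_vec v = 2"
  shows "(M2 a b *\<^sub>v v) $ 0 = a * v$0 - b * v$1"
    "(M2 a b *\<^sub>v v) $ 1 = v$0"
  using assms by (auto simp: M2_def mat_of_rows_list_def scalar_prod_def row_def numeral_2_eq_2 sum.atLeast0_lessThan_Suc)

lemma M2_len: "length [[a::complex, -b],[1,0]] = 2" by simp

lemma M2_carrier: "M2 a b \<in> carrier_mat 2 2"
  unfolding M2_def mat_of_rows_list_def M2_len by (rule mat_carrier)

lemma M2_dim: "dim_row (M2 a b) = 2" "dim_col (M2 a b) = 2"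
  using M2_carrier[of a b] by auto

lemma vec2_eq: fixes v w :: "complex vec"
  assumes "dim_vec v = 2" "dim_vec w = 2" "v$0 = w$0" "v$1 = w$1"
  shows "v = w"
proof (rule eq_vecI)
  fix i assume "i < dim_vec w"
  then have "i = 0 \<or> i = 1" using assms by auto
  then show "v $ i = w $ i" using assms by auto
qed (use assms in auto)

lemma ev2: fixes a b z :: complex
  shows "eigenvalue (M2 a b) z \<longleftrightarrow> z^2 - a*z + b = 0"
proof
  assume ev: "eigenvalue (M2 a b) z"
  from ev[unfolded eigenvalue_def eigenvector_def M2_dim]
  obtain v where v: "v \<in> carrier_vec 2" "v \<noteq> 0\<^sub>v 2" "M2 a b *\<^sub>v v = z \<cdot>\<^sub>v v"
    by blast
  have dv: "dim_vec v = 2" using v(1) by auto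
  have e0: "a * v$0 - b * v$1 = z * v$0"
    using arg_cong[OF v(3), of "\<lambda>w. w $ 0"] M2_mult(1)[OF dv] dv by simp
  have e1: "v$0 = z * v$1"
    using arg_cong[OF v(3), of "\<lambda>w. w $ 1"] M2_mult(2)[OF dv] dv by simp
  have "v$1 \<noteq> 0"
  proof
    assume h: "v$1 = 0"
    then have "v$0 = 0" using e1 by simp
    then have "v = 0\<^sub>v 2" using h dv by (intro vec2_eq) auto
    with v(2) show False by simp
  qed
  moreover have "(z^2 - a*z + b) * v$1 = z * v$0 - (a * v$0 - b * v$1)"
    unfolding e1 by (simp add: algebra_simps power2_eq_square)
  moreover have "z * v$0 - (a * v$0 - b * v$1) = 0" using e0 by simp
  ultimately show "z^2 - a*z + b = 0" by (metis mult_eq_0_iff)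
next
  assume h: "z^2 - a*z + b = 0"
  define v where "v = vec_of_list [z, 1]"
  have dv: "dim_vec v = 2" by (simp add: v_def)
  have v0: "v$0 = z" and v1: "v$1 = 1" by (simp_all add: v_def vec_of_list_index)
  have "eigenvector (M2 a b) v z"
    unfolding eigenvector_def M2_dim
  proof (intro conjI)
    show "v \<in> carrier_vec 2" using dv by (rule carrier_vecI)
    show "v \<noteq> 0\<^sub>v 2"
    proof
      assume "v = 0\<^sub>v 2"
      then have "v $ 1 = 0" by simp
      then show False using v1 by simp
    qed
    have "a * z - b = z * z" using h by (simp add: algebra_simps power2_eq_square)
    then have x0: "(M2 a b *\<^sub>v v) $ 0 = (z \<cdot>\<^sub>v v) $ 0"
      using M2_mult(1)[OF dv] v0 v1 dv by simp
    have x1: "(M2 a b *\<^sub>v v) $ 1 = (z \<cdot>\<^sub>v v) $ 1"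
      using M2_mult(2)[OF dv] v0 v1 dv by simp
    show "M2 a b *\<^sub>v v = z \<cdot>\<^sub>v v"
      by (rule vec2_eq[OF _ _ x0 x1]) (simp_all add: dv M2_dim)
  qed
  then show "eigenvalue (M2 a b) z" unfolding eigenvalue_def by blast
qed

lemma T_map: "map_mat complex_of_real (T_mat lam \<alpha> \<beta> \<gamma>) =
   M2 (of_real ((1 + \<beta>) * (1 - \<alpha> * lam) - \<gamma> * \<alpha> * lam)) (of_real (\<beta> * (1 - \<alpha> * lam)))"
  (is "?A = ?B")
proof (rule eq_matI)
  have dT: "dim_row (T_mat lam \<alpha> \<beta> \<gamma>) = 2" "dim_col (T_mat lam \<alpha> \<beta> \<gamma>) = 2"
    by (simp_all add: T_mat_def mat_of_rows_list_def)
  show "dim_row ?A = dim_row ?B" "dim_col ?A = dim_col ?B" by (simp_all add: dT M2_dim)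
  fix i j assume "i < dim_row ?B" "j < dim_col ?B"
  then have ij: "i = 0 \<or> i = 1" "j = 0 \<or> j = 1" by (auto simp: M2_dim)
  have "i < 2" "j < 2" using ij by auto
  then have "?A $$ (i,j) = complex_of_real (T_mat lam \<alpha> \<beta> \<gamma> $$ (i,j))" by (simp add: dT)
  then show "?A $$ (i,j) = ?B $$ (i,j)"
    using ij by (auto simp: M2_def T_mat_def mat_of_rows_list_def)
qed

lemma sr_le: assumes "\<And>z. z^2 - a*z + b = 0 \<Longrightarrow> cmod z \<le> r"
  shows "spectral_radius (M2 a b) \<le> r"
proof -
  have "spectral_radius (M2 a b) \<in> norm ` spectrum (M2 a b)"
    by (rule spectral_radius_mem_max(1)[OF M2_carrier]) simp
  then obtain z where "eigenvalue (M2 a b) z" "spectral_radius (M2 a b) = cmod z"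
    unfolding spectrum_def by auto
  then show ?thesis using assms ev2 by metis
qed

lemma sr_ge: assumes "z^2 - a*z + b = 0"
  shows "cmod z \<le> spectral_radius (M2 a b)"
proof -
  have "eigenvalue (M2 a b) z" using assms ev2 by metis
  then show ?thesis
    by (intro spectral_radius_mem_max(2)[OF M2_carrier]) (auto simp: spectrum_def)
qed


lemma quad_parts: fixes a b :: real and z :: complex
  assumes "z^2 - of_real a * z + of_real b = 0"
  shows "Re z ^2 - Im z ^2 - a * Re z + b = 0" "Im z * (2 * Re z - a) = 0"
proof -
  have "Re (z^2 - of_real a * z + of_real b) = 0" "Im (z^2 - of_real a * z + of_real b) = 0"
    using assms by simp_all
  then show "Re z ^2 - Im z ^2 - a * Re z + b = 0" "Im z * (2 * Re z - a) = 0"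
    by (simp_all add: power2_eq_square algebra_simps)
qed

lemma root_upper: fixes a b r :: real and z :: complex
  assumes r: "r > 0" and b: "b \<le> r^2" and ar: "r * \<bar>a\<bar> \<le> r^2 + b"
    and z: "z^2 - of_real a * z + of_real b = 0"
  shows "cmod z \<le> r"
proof -
  note e = quad_parts[OF z]
  define x where "x = Re z"
  define y where "y = Im z"
  have e1: "x^2 - y^2 - a*x + b = 0" and e2: "y * (2*x - a) = 0" using e by (simp_all add: x_def y_def)
  have "(cmod z)^2 \<le> r^2"
  proof (cases "y = 0")
    case False
    then have ax: "a = 2*x" using e2 by simp
    have e1': "x^2 - y^2 - 2*(x*x) + b = 0" using e1 unfolding ax by (simp add: mult.assoc)
    have "x*x = x^2" by (simp add: power2_eq_square)
    then have "x^2 + y^2 = b" using e1' by linarith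
    then show ?thesis using b by (simp add: cmod_power2 x_def y_def)
  next
    case True
    then have e3: "x^2 - a*x + b = 0" using e1 by simp
    have "\<bar>a\<bar> \<le> 2 * r"
    proof -
      have "r * \<bar>a\<bar> \<le> r * (2*r)" using ar b by (simp add: power2_eq_square)
      then show ?thesis using r by simp
    qed
    have "\<bar>x\<bar> \<le> r"
    proof (rule ccontr)
      assume "\<not> \<bar>x\<bar> \<le> r"
      then consider "x > r" | "x < -r" by linarith
      then show False
      proof cases
        case 1
        have "x^2 - a*x + b - (r^2 - a*r + b) = (x - r) * (x + r - a)" by (simp add: power2_eq_square algebra_simps)
        moreover have "(x - r) * (x + r - a) > 0" using 1 \<open>\<bar>a\<bar> \<le> 2 * r\<close> by (intro mult_pos_pos) auto
        moreover have "r^2 - a*r + b \<ge> 0"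
        proof -
          have "a*r \<le> \<bar>a\<bar>*r" using r by (intro mult_right_mono) auto
          then show ?thesis using ar by (simp add: mult.commute)
        qed
        ultimately show False using e3 by linarith
      next
        case 2
        have "x^2 - a*x + b - (r^2 + a*r + b) = (-x - r) * (-x + r + a)" by (simp add: power2_eq_square algebra_simps)
        moreover have "(-x - r) * (-x + r + a) > 0" using 2 \<open>\<bar>a\<bar> \<le> 2 * r\<close> by (intro mult_pos_pos) auto
        moreover have "r^2 + a*r + b \<ge> 0"
        proof -
          have "-a*r \<le> \<bar>a\<bar>*r" using r by (intro mult_right_mono) auto
          then show ?thesis using ar by (simp add: mult.commute)
        qed
        ultimately show False using e3 by linarith
      qed
    qed
    then show ?thesis using True r by (simp add: cmod_power2 x_def y_def power2_le_iff_abs_le)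
  qed
  then show ?thesis using r by (simp add: power2_le_iff_abs_le)
qed

lemma root_lower: fixes a b g :: real
  assumes g: "g > 0" and h: "b \<ge> g^2 \<or> g^2 - a*g + b \<le> 0"
  shows "\<exists>z::complex. z^2 - of_real a * z + of_real b = 0 \<and> g \<le> cmod z"
proof (cases "a^2 - 4*b < 0")
  case True
  define D where "D = a^2 - 4*b"
  define z where "z = Complex (a/2) (sqrt (-D)/2)"
  have sq: "sqrt (-D) ^2 = -D" using True D_def by simp
  have "z^2 - of_real a * z + of_real b = 0"
    unfolding z_def using sq by (simp add: complex_eq_iff power2_eq_square D_def field_simps)
  moreover have "(cmod z)^2 = b"
    unfolding z_def cmod_power2 using sq by (simp add: D_def power2_eq_square field_simps)
  moreover have "b \<ge> g^2"
  proof -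
    have "g^2 - a*g + b = (g - a/2)^2 + (b - a^2/4)" by (simp add: power2_eq_square field_simps)
    moreover have "(g - a/2)^2 \<ge> 0" by simp
    ultimately have "g^2 - a*g + b > 0" using True by linarith
    then show ?thesis using h by linarith
  qed
  ultimately show ?thesis using g
    by (metis abs_of_pos norm_ge_zero power2_le_imp_le)
next
  case False
  define D where "D = a^2 - 4*b"
  have sq: "sqrt D ^2 = D" using False D_def by simp
  have sD: "sqrt D \<ge> 0" using False D_def by simp
  define x1 where "x1 = (a + sqrt D)/2"
  define x2 where "x2 = (a - sqrt D)/2"
  have r1: "x1^2 - a*x1 + b = 0" unfolding x1_def using sq by (simp add: D_def power2_eq_square field_simps)
  have r2: "x2^2 - a*x2 + b = 0" unfolding x2_def using sq by (simp add: D_def power2_eq_square field_simps)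
  have prod: "x1 * x2 = b" unfolding x1_def x2_def using sq by (simp add: D_def power2_eq_square field_simps)
  have le: "x2 \<le> x1" unfolding x1_def x2_def using sD by simp
  have fac: "g^2 - a*g + b = (g - x1) * (g - x2)" unfolding x1_def x2_def using sq
    by (simp add: D_def power2_eq_square field_simps)
  have "\<exists>x. x^2 - a*x + b = 0 \<and> g \<le> \<bar>x\<bar>"
  proof (cases "g \<le> \<bar>x1\<bar>")
    case True then show ?thesis using r1 by blast
  next
    case c1: False
    show ?thesis
    proof (cases "g \<le> \<bar>x2\<bar>")
      case True then show ?thesis using r2 by blast
    next
      case c2: False
      have "\<bar>x1\<bar> * \<bar>x2\<bar> < g * g" using c1 c2 by (intro abs_mult_less) auto
      then have "b < g^2" using prod by (simp add: power2_eq_square abs_mult[symmetric])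
      moreover have "(g - x1) * (g - x2) > 0" using c1 c2 by (intro mult_pos_pos) auto
      ultimately show ?thesis using h fac by linarith
    qed
  qed
  then obtain x where x: "x^2 - a*x + b = 0" "g \<le> \<bar>x\<bar>" by blast
  show ?thesis
  proof (intro exI conjI)
    show "(complex_of_real x)^2 - of_real a * of_real x + of_real b = 0"
      using arg_cong[OF x(1), of complex_of_real] by simp
    show "g \<le> cmod (complex_of_real x)" using x(2) by simp
  qed
qed

lemma root_bound: fixes a b :: real and z :: complex
  assumes z: "z^2 - of_real a * z + of_real b = 0"
  shows "cmod z \<le> 1 + \<bar>a\<bar> + \<bar>b\<bar>"
proof (cases "cmod z \<le> 1")
  case True then show ?thesis by simp
next
  case False
  have "z^2 = of_real a * z - of_real b" using z by (simp add: algebra_simps)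
  then have "cmod z * cmod z \<le> \<bar>a\<bar> * cmod z + \<bar>b\<bar>"
    by (metis norm_mult norm_of_real norm_triangle_ineq4 power2_eq_square)
  also have "\<dots> \<le> \<bar>a\<bar> * cmod z + \<bar>b\<bar> * cmod z" using False abs_ge_zero[of b] mult_left_mono[of 1 "cmod z" "\<bar>b\<bar>"] by simp
  finally have "cmod z * cmod z \<le> (\<bar>a\<bar> + \<bar>b\<bar>) * cmod z" by (simp add: algebra_simps)
  moreover have "cmod z > 0" using False by linarith
  ultimately have "cmod z \<le> \<bar>a\<bar> + \<bar>b\<bar>" using mult_right_le_imp_le[of "cmod z" "cmod z" "\<bar>a\<bar> + \<bar>b\<bar>"] by simp
  then show ?thesis by simp
qed


definition Aqf :: "real \<Rightarrow> real \<Rightarrow> real \<Rightarrow> real" where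
  "Aqf \<beta> \<gamma> t = (1 + \<beta>) * (1 - t) - \<gamma> * t"
definition Bqf :: "real \<Rightarrow> real \<Rightarrow> real" where
  "Bqf \<beta> t = \<beta> * (1 - t)"

lemma fT: "spec_rad_real (T_mat lam \<alpha> \<beta> \<gamma>) =
  spectral_radius (M2 (of_real (Aqf \<beta> \<gamma> (\<alpha>*lam))) (of_real (Bqf \<beta> (\<alpha>*lam))))"
  unfolding spec_rad_real_def T_map Aqf_def Bqf_def by (simp add: mult.assoc)

lemma f_bound: assumes "0 \<le> t" "t \<le> 1"
  shows "spectral_radius (M2 (of_real (Aqf \<beta> \<gamma> t)) (of_real (Bqf \<beta> t))) \<le> 1 + \<bar>1+\<beta>\<bar> + \<bar>\<gamma>\<bar> + \<bar>\<beta>\<bar>"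
proof (rule sr_le)
  fix z :: complex assume z: "z^2 - of_real (Aqf \<beta> \<gamma> t) * z + of_real (Bqf \<beta> t) = 0"
  have "\<bar>(1 + \<beta>) * (1 - t)\<bar> \<le> \<bar>1+\<beta>\<bar>" using assms by (simp add: abs_mult mult_left_le)
  moreover have "\<bar>\<gamma> * t\<bar> \<le> \<bar>\<gamma>\<bar>" using assms by (simp add: abs_mult mult_left_le)
  moreover have "\<bar>\<beta> * (1 - t)\<bar> \<le> \<bar>\<beta>\<bar>" using assms by (simp add: abs_mult mult_left_le)
  ultimately have "\<bar>Aqf \<beta> \<gamma> t\<bar> + \<bar>Bqf \<beta> t\<bar> \<le> \<bar>1+\<beta>\<bar> + \<bar>\<gamma>\<bar> + \<bar>\<beta>\<bar>"
    unfolding Aqf_def Bqf_def by linarith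
  then show "cmod z \<le> 1 + \<bar>1+\<beta>\<bar> + \<bar>\<gamma>\<bar> + \<bar>\<beta>\<bar>" using root_bound[OF z] by linarith
qed


lemma ineq_part:
  fixes q s :: real
  assumes q0: "0 < q" and q1: "q < 1" and s_def: "s = sqrt (q^2 + 8*q)"
  shows "(2 + q - sqrt (q^2 + 8 * q)) / 2 \<le> 1 - 2 * sqrt q / sqrt (3 + q)"
    and "1 - 2 * sqrt q / sqrt (3 + q) \<le> 1 - sqrt q"
proof -
  have qq: "0 \<le> q^2 + 8*q"
  proof -
    have "0 \<le> q^2" by simp
    moreover have "0 \<le> 8*q" using q0 by simp
    ultimately show ?thesis by linarith
  qed
  have s2: "s^2 = q^2 + 8*q" unfolding s_def using qq by simp
  have s0: "s \<ge> 0" using qq by (simp add: s_def)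
  have sgt: "q < s"
  proof -
    have "q^2 < s^2" using s2 q0 by simp
    then show ?thesis using s0 by (simp add: power_less_imp_less_base)
  qed
  show "1 - 2 * sqrt q / sqrt (3 + q) \<le> 1 - sqrt q"
  proof -
    have "sqrt (3 + q) \<le> sqrt 4" using q1 by (intro real_sqrt_le_mono) linarith
    then have le2: "sqrt (3 + q) \<le> 2" by simp
    have pos: "sqrt (3+q) > 0" using q0 by simp
    have "sqrt q * sqrt (3 + q) \<le> sqrt q * 2"
      using mult_left_mono[OF le2, of "sqrt q"] q0 by simp
    then have "sqrt q \<le> 2 * sqrt q / sqrt (3 + q)" using pos by (simp add: le_divide_eq mult.commute)
    then show ?thesis by linarith
  qed
  define u where "u = sqrt q"
  define w where "w = sqrt (3 + q)"
  have u2: "u^2 = q" using q0 by (simp add: u_def)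
  have w2: "w^2 = 3 + q" using q0 by (simp add: w_def)
  have u0: "u \<ge> 0" and w0: "w > 0" using q0 by (simp_all add: u_def w_def)
  have key1: "s * (3 + q) \<le> q^2 + 7*q + 4"
  proof -
    have a: "(s * (3 + q))^2 = (q^2 + 8*q) * (3+q)^2" unfolding power_mult_distrib s2 ..
    have b: "(q^2 + 7*q + 4)^2 - (q^2 + 8*q) * (3+q)^2 = 16 - 16*q"
      by (simp add: power2_eq_square algebra_simps)
    have "(s * (3 + q))^2 \<le> (q^2 + 7*q + 4)^2" using a b q1 by linarith
    moreover have "0 \<le> q^2 + 7*q + 4" using qq q0 q1 by linarith
    ultimately show ?thesis by (rule power2_le_imp_le)
  qed
  have key2: "16 * q \<le> (s - q)^2 * (3 + q)"
  proof -
    have "(s - q)^2 = s^2 - 2*q*s + q^2" by (simp add: power2_eq_square algebra_simps)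
    also have "\<dots> = 2*q*(q + 4 - s)" unfolding s2 by (simp add: power2_eq_square algebra_simps)
    finally have e: "(s - q)^2 * (3 + q) = q * (2 * (q + 4 - s) * (3 + q))" by simp
    have "2 * (q + 4 - s) * (3 + q) = 2 * ((q+4)*(3+q) - s*(3+q))" by (simp add: algebra_simps)
    also have "\<dots> \<ge> 16" using key1 by (simp add: algebra_simps power2_eq_square)
    finally have "16 \<le> 2 * (q + 4 - s) * (3 + q)" .
    then have "q * 16 \<le> q * (2 * (q + 4 - s) * (3 + q))" using q0 by (intro mult_left_mono) auto
    then show ?thesis using e by linarith
  qed
  have "(4*u)^2 = 16 * q" using u2 by (simp add: power_mult_distrib)
  moreover have "((s - q) * w)^2 = (s - q)^2 * (3 + q)" using w2 by (simp add: power_mult_distrib)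
  ultimately have "(4*u)^2 \<le> ((s - q) * w)^2" using key2 by linarith
  moreover have "0 \<le> (s - q) * w" using sgt w0 by simp
  ultimately have "4*u \<le> (s - q) * w" by (rule power2_le_imp_le)
  then have h4: "4*u \<le> (s - q) * w" .
  define V where "V = u / w"
  have uV: "u = V * w" using w0 by (simp add: V_def)
  have "(4*V) * w \<le> (s - q) * w" using h4 unfolding uV by (simp add: mult.assoc)
  then have "4*V \<le> s - q" using w0 by (rule mult_right_le_imp_le)
  then have "(2 + q - s)/2 \<le> 1 - 2 * V" by (simp add: field_simps)
  moreover have eq2: "2 * u / w = 2 * V" by (simp add: V_def)
  ultimately have "(2 + q - s)/2 \<le> 1 - 2 * u / w" by simp
  then show "(2 + q - sqrt (q^2 + 8 * q)) / 2 \<le> 1 - 2 * sqrt q / sqrt (3 + q)"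
    unfolding u_def w_def s_def .
qed

lemma sqq_part: fixes q g :: real
  assumes gid: "g^2 - (2+q)*g + (1-q) = 0" and g1: "g < 1"
  shows "1 - sqrt (q * (1 + g)) = g"
proof -
  have "(1-g)^2 - q*(1+g) = g^2 - (2+q)*g + (1-q)" by (simp add: power2_eq_square algebra_simps)
  then have "q * (1 + g) = (1 - g)^2" using gid by linarith
  then have "sqrt (q * (1 + g)) = 1 - g" using g1 by simp
  then show ?thesis by simp
qed

theorem mainTheorem1:
  fixes \<mu> L :: real
  assumes "0 < \<mu>" and "\<mu> < L"
  defines "q \<equiv> \<mu> / L"
  defines "\<gamma>s \<equiv> (2 + q - sqrt (q^2 + 8 * q)) / 2"
  defines "\<beta>s \<equiv> \<gamma>s^2 / (1 - q)"
  shows "(\<forall>\<beta> \<gamma>. rho_worst \<mu> L (1 / L) \<beta>s \<gamma>s \<le> rho_worst \<mu> L (1 / L) \<beta> \<gamma>)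
     \<and> rho_worst \<mu> L (1 / L) \<beta>s \<gamma>s = 1 - sqrt (q * (1 + \<gamma>s))
     \<and> 1 - sqrt (q * (1 + \<gamma>s)) = \<gamma>s
     \<and> \<beta>s = (2 + q - sqrt (q^2 + 8 * q))^2 / (4 * (1 - q))
     \<and> (2 + q - sqrt (q^2 + 8 * q)) / 2 \<le> 1 - 2 * sqrt q / sqrt (3 + q)
     \<and> 1 - 2 * sqrt q / sqrt (3 + q) \<le> 1 - sqrt q"
proof -
  define s where "s = sqrt (q^2 + 8 * q)"
  define g where "g = \<gamma>s"
  have L0: "L > 0" using assms by linarith
  have q0: "q > 0" and q1: "q < 1" using assms L0 by (simp_all add: q_def field_simps)
  have qq: "0 \<le> q^2 + 8*q"
  proof -
    have "0 \<le> q^2" by simp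
    moreover have "0 \<le> 8*q" using q0 by simp
    ultimately show ?thesis by linarith
  qed
  have s2: "s^2 = q^2 + 8*q" unfolding s_def using qq by simp
  have s0: "s \<ge> 0" using qq by (simp add: s_def)
  have gdef: "g = (2 + q - s)/2" by (simp add: g_def \<gamma>s_def s_def)
  have gid: "g^2 - (2+q)*g + (1-q) = 0" unfolding gdef using s2 by (simp add: power2_eq_square field_simps)
  have sq: "s < 2 + q"
  proof -
    have "s^2 < (2+q)^2" using s2 q1 by (simp add: power2_eq_square algebra_simps)
    then show ?thesis using q0 s0 by (simp add: power_less_imp_less_base)
  qed
  have sgt: "q < s"
  proof -
    have "q^2 < s^2" using s2 q0 by simp
    then show ?thesis using s0 by (simp add: power_less_imp_less_base)
  qed
  have g0: "g > 0" using sq gdef by simp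
  have g1: "g < 1" using sgt gdef by simp
  have bs: "\<beta>s * (1 - q) = g^2" using q1 by (simp add: \<beta>s_def g_def)
  have bs0: "\<beta>s \<ge> 0" using q1 by (simp add: \<beta>s_def)
  have tq: "(1/L) * \<mu> = q" by (simp add: q_def)
  have t1: "(1/L) * L = 1" using L0 by simp
  have trange: "q \<le> (1/L) * lam \<and> (1/L) * lam \<le> 1" if "lam \<in> {\<mu>..L}" for lam
    using that L0 by (auto simp: q_def field_simps)
  define f where "f \<beta> \<gamma> lam = spec_rad_real (T_mat lam (1/L) \<beta> \<gamma>)" for \<beta> \<gamma> lam
  have rw: "rho_worst \<mu> L (1/L) \<beta> \<gamma> = (SUP lam\<in>{\<mu>..L}. f \<beta> \<gamma> lam)" for \<beta> \<gamma>
    by (simp add: rho_worst_def f_def)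
  have ne: "{\<mu>..L} \<noteq> {}" using assms by simp
  have bdd: "bdd_above (f \<beta> \<gamma> ` {\<mu>..L})" for \<beta> \<gamma>
  proof (rule bdd_aboveI2)
    fix lam assume "lam \<in> {\<mu>..L}"
    then have "0 \<le> (1/L) * lam" "(1/L) * lam \<le> 1" using trange q0 by force+
    then show "f \<beta> \<gamma> lam \<le> 1 + \<bar>1+\<beta>\<bar> + \<bar>\<gamma>\<bar> + \<bar>\<beta>\<bar>"
      unfolding f_def fT by (rule f_bound)
  qed
  have Lin: "L \<in> {\<mu>..L}" and muin: "\<mu> \<in> {\<mu>..L}" using assms by auto
  have fL: "\<bar>\<gamma>\<bar> \<le> f \<beta> \<gamma> L" for \<beta> \<gamma>
  proof -
    have "cmod (- complex_of_real \<gamma>) \<le> spectral_radius (M2 (of_real (Aqf \<beta> \<gamma> 1)) (of_real (Bqf \<beta> 1)))"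
      by (rule sr_ge) (simp add: Aqf_def Bqf_def power2_eq_square)
    then show ?thesis unfolding f_def fT t1 by simp
  qed
  have lower: "g \<le> rho_worst \<mu> L (1/L) \<beta> \<gamma>" for \<beta> \<gamma>
  proof (rule ccontr)
    assume "\<not> g \<le> rho_worst \<mu> L (1/L) \<beta> \<gamma>"
    then have R: "(SUP lam\<in>{\<mu>..L}. f \<beta> \<gamma> lam) < g" unfolding rw by simp
    have "f \<beta> \<gamma> L \<le> (SUP lam\<in>{\<mu>..L}. f \<beta> \<gamma> lam)" by (rule cSUP_upper[OF Lin bdd])
    then have gam: "\<gamma> < g" using fL[of \<gamma> \<beta>] R by linarith
    have fmu: "f \<beta> \<gamma> \<mu> < g" using cSUP_upper[OF muin bdd, of \<beta> \<gamma>] R by linarith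
    define A where "A = Aqf \<beta> \<gamma> q"
    define B where "B = Bqf \<beta> q"
    have fmu': "f \<beta> \<gamma> \<mu> = spectral_radius (M2 (of_real A) (of_real B))"
      unfolding f_def fT tq A_def B_def ..
    have nc: "\<not> (B \<ge> g^2 \<or> g^2 - A*g + B \<le> 0)"
    proof
      assume "B \<ge> g^2 \<or> g^2 - A*g + B \<le> 0"
      from root_lower[OF g0 this] obtain z where z: "z^2 - of_real A * z + of_real B = 0" "g \<le> cmod z" by blast
      from sr_ge[OF z(1)] z(2) fmu fmu' show False by linarith
    qed
    have "g^2 - A*g + B = g*q*(\<gamma> - g) + (B - g^2)*(1-g) - g*(g^2 - (2+q)*g + (1-q))"
      unfolding A_def B_def Aqf_def Bqf_def by (simp add: power2_eq_square algebra_simps)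
    also have "\<dots> = g*q*(\<gamma> - g) + (B - g^2)*(1-g)" using gid by simp
    also have "\<dots> < 0"
    proof -
      have "g*q > 0" using g0 q0 by simp
      moreover have "\<gamma> - g < 0" using gam by linarith
      ultimately have "g*q*(\<gamma> - g) < 0" by (rule mult_pos_neg)
      moreover have "(B - g^2)*(1-g) < 0"
      proof (rule mult_neg_pos)
        show "B - g^2 < 0" using nc by linarith
        show "0 < 1 - g" using g1 by linarith
      qed
      ultimately show ?thesis by linarith
    qed
    finally show False using nc by linarith
  qed
  have fup: "f \<beta>s \<gamma>s lam \<le> g" if lam: "lam \<in> {\<mu>..L}" for lam
  proof -
    define t where "t = (1/L) * lam"
    have tr: "q \<le> t" "t \<le> 1" using trange[OF lam] by (simp_all add: t_def)
    define A where "A = Aqf \<beta>s g t"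
    define B where "B = Bqf \<beta>s t"
    have fe: "f \<beta>s \<gamma>s lam = spectral_radius (M2 (of_real A) (of_real B))"
      unfolding f_def fT A_def B_def t_def g_def ..
    have hB: "B \<le> g^2"
    proof -
      have "\<beta>s * (1 - t) \<le> \<beta>s * (1 - q)" using bs0 tr by (intro mult_left_mono) auto
      then show ?thesis using bs by (simp add: B_def Bqf_def)
    qed
    have h2: "g^2 + B + g*A \<ge> 0"
    proof -
      have "g^2 + B + g*A = g^2*(1-t) + (1-t)*(\<beta>s + g + g*\<beta>s)"
        by (simp add: A_def B_def Aqf_def Bqf_def power2_eq_square algebra_simps)
      moreover have "g^2*(1-t) \<ge> 0" using tr by simp
      moreover have "(1-t)*(\<beta>s + g + g*\<beta>s) \<ge> 0" using tr g0 bs0 by (intro mult_nonneg_nonneg add_nonneg_nonneg) auto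
      ultimately show ?thesis by linarith
    qed
    have h1: "g^2 + B - g*A \<ge> 0"
    proof -
      have gq: "g*(1-q) = (2+q)*g^2 - g^3"
      proof -
        have "g*(g^2 - (2+q)*g + (1-q)) = 0" using gid by simp
        then show ?thesis by (simp add: algebra_simps power2_eq_square power3_eq_cube)
      qed
      have "(1-q)*(g^2 + B - g*A) = (1-q)*g^2*(1+t) + (1-t)*(1-g)*(\<beta>s*(1-q)) - (1-t)*(g*(1-q))"
        unfolding A_def B_def Aqf_def Bqf_def by (simp add: algebra_simps power2_eq_square)
      also have "\<dots> = (1-q)*g^2*(1+t) + (1-t)*(1-g)*g^2 - (1-t)*((2+q)*g^2 - g^3)"
        unfolding bs gq ..
      also have "\<dots> = 2*g^2*(t-q)" by (simp add: algebra_simps power2_eq_square power3_eq_cube)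
      finally have "(1-q)*(g^2 + B - g*A) = 2*g^2*(t-q)" .
      moreover have "2*g^2*(t-q) \<ge> 0" using tr by simp
      ultimately have "(1-q)*(g^2 + B - g*A) \<ge> 0" by linarith
      then show ?thesis using q1 by (simp add: zero_le_mult_iff)
    qed
    have "\<bar>g * A\<bar> \<le> g^2 + B" unfolding abs_le_iff using h1 h2 by linarith
    then have "g * \<bar>A\<bar> \<le> g^2 + B" using g0 by (simp add: abs_mult)
    then have hA: "g * \<bar>A\<bar> \<le> g^2 + B" .
    show ?thesis unfolding fe
    proof (rule sr_le)
      fix z :: complex assume "z^2 - of_real A * z + of_real B = 0"
      then show "cmod z \<le> g" by (rule root_upper[OF g0 hB hA])
    qed
  qed
  have bddg: "bdd_above (f \<beta>s \<gamma>s ` {\<mu>..L})" by (rule bdd)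
  have opt: "rho_worst \<mu> L (1/L) \<beta>s \<gamma>s = g"
  proof (rule antisym)
    show "rho_worst \<mu> L (1/L) \<beta>s \<gamma>s \<le> g" unfolding rw by (rule cSUP_least[OF ne fup])
    show "g \<le> rho_worst \<mu> L (1/L) \<beta>s \<gamma>s" by (rule lower)
  qed
  have sqq: "1 - sqrt (q * (1 + \<gamma>s)) = \<gamma>s"
    using sqq_part[OF gid g1] by (simp add: g_def)
  have beq: "\<beta>s = (2 + q - sqrt (q^2 + 8 * q))^2 / (4 * (1 - q))"
    by (simp add: \<beta>s_def \<gamma>s_def power_divide)
  note in12 = ineq_part[OF q0 q1 s_def]
  have c1: "\<forall>\<beta> \<gamma>. rho_worst \<mu> L (1 / L) \<beta>s \<gamma>s \<le> rho_worst \<mu> L (1 / L) \<beta> \<gamma>"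
    using opt lower by simp
  have c2: "rho_worst \<mu> L (1 / L) \<beta>s \<gamma>s = 1 - sqrt (q * (1 + \<gamma>s))"
    using opt sqq by (simp add: g_def)
  show ?thesis
    by (intro conjI c1 c2 sqq beq in12)
qed


end
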